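(* Let $f:\mathbb{R}\to\mathbb{C}$ be Lebesgue measurable. Suppose that for every trigonometric polynomial $u$ that is not identically zero, every finite subset $B=\{b_1,\ldots,b_n\}\subset\mathbb{R}_+$, and every $M>0$, the set \[ E_{u,M,B}=\Big\{x\in\mathbb{R}_+: |u(x)f(x)|>M\sum_{i=1}^n|f(x+b_i)|\Big\} \] has positive Lebesgue measure. Then $\mathcal G(f,\mathbb{R}^2)$ is linearly independent. Moreover, if for some $b>0$ this hypothesis is only assumed for finite subsets $B\subset b\mathbb{N}$ (and all nonzero trigonometric polynomials $u$ and all $M>0$), then $\mathcal G(f,\mathbb{R}\times b\mathbb{Z})$ is linearly independent.
   Context: $\mathbb{R}_+=(0,\infty)$. A trigonometric polynomial is a function $u(x)=\sum_{j=1}^m c_je^{2\pi i a_j x}$ with $a_j\in\mathbb{R}$, $c_j\in\mathbb{C}$ (not necessarily periodic). For $a,b\in\mathbb{R}$, $M_aT_bf(x)=e^{2\pi i a x}f(x-b)$, and for $\Lambda\subset\mathbb{R}^2$, $\mathcal G(f,\Lambda)=\{M_aT_bf:(a,b)\in\Lambda\}$. Measurable functions equal a.e. are identified; $\mathcal G(f,\Lambda)$ is linearly independent if for every finite $F\subset\Lambda$ and coefficients $c_{(a,b)}$, $(a,b)\in F$, not all zero, $\sum_{(a,b)\in F}c_{(a,b)}M_aT_bf$ is not zero almost everywhere. *)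

theory Defs
  imports "HOL-Analysis.Analysis"
begin

definition trig_poly :: "(real \<Rightarrow> complex) \<Rightarrow> bool" where
  "trig_poly u \<longleftrightarrow> (\<exists>A::real set. \<exists>c::real \<Rightarrow> complex. finite A \<and>
      u = (\<lambda>x. \<Sum>a\<in>A. c a * exp (2 * pi * \<i> * complex_of_real (a * x))))"

definition MT :: "real \<Rightarrow> real \<Rightarrow> (real \<Rightarrow> complex) \<Rightarrow> real \<Rightarrow> complex" where
  "MT a b f x = exp (2 * pi * \<i> * complex_of_real (a * x)) * f (x - b)"

definition gabor_lin_indep :: "(real \<Rightarrow> complex) \<Rightarrow> (real \<times> real) set \<Rightarrow> bool" where
  "gabor_lin_indep f \<Lambda> \<longleftrightarrow>
     (\<forall>F c. finite F \<and> F \<subseteq> \<Lambda> \<and> (\<exists>p\<in>F. c p \<noteq> (0::complex)) \<longrightarrow>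
        \<not> (AE x in lebesgue. (\<Sum>p\<in>F. c p * MT (fst p) (snd p) f x) = 0))"

definition E_set :: "(real \<Rightarrow> complex) \<Rightarrow> real \<Rightarrow> real set \<Rightarrow> (real \<Rightarrow> complex) \<Rightarrow> real set" where
  "E_set u M B f = {x. 0 < x \<and> cmod (u x * f x) > M * (\<Sum>b\<in>B. cmod (f (x + b)))}"

definition E_hyp :: "(real \<Rightarrow> complex) \<Rightarrow> real set \<Rightarrow> bool" where
  "E_hyp f S \<longleftrightarrow> (\<forall>u M B. trig_poly u \<and> u \<noteq> (\<lambda>_. 0) \<and> finite B \<and> B \<subseteq> S \<and> M > 0 \<longrightarrow>
      emeasure lebesgue (E_set u M B f) > 0)"

end

theory Submission
  imports Defs
begin

lemma AE_translate:
  assumes "AE x in lebesgue. P x"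
  shows "AE y in (lebesgue::real measure). P (y + t)"
proof -
  from assms have "AE x in (lborel::real measure). P x" by (simp add: AE_completion_iff)
  then obtain N where N: "N \<in> null_sets lborel" "{x \<in> space lborel. \<not> P x} \<subseteq> N"
    by (auto simp: eventually_ae_filter)
  have "{x. x - (-t) \<in> N} \<in> null_sets lborel" by (rule null_sets_translation[OF N(1)])
  moreover have "{y \<in> space lborel. \<not> P (y + t)} \<subseteq> {x. x - (-t) \<in> N}" using N(2) by auto
  ultimately have "AE y in (lborel::real measure). P (y + t)" by (auto simp: eventually_ae_filter)
  then show ?thesis by (simp add: AE_completion_iff)
qed

abbreviation ee :: "real \<Rightarrow> real \<Rightarrow> complex" where
  "ee a x \<equiv> exp (2 * pi * \<i> * complex_of_real (a * x))"

lemma ee_add: "ee a (x + t) = ee a t * ee a x"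
  by (simp add: distrib_left exp_add[symmetric] algebra_simps)

lemma ee_neq: assumes "a \<noteq> a0" shows "ee a (1 / (2 * (a - a0))) \<noteq> ee a0 (1 / (2 * (a - a0)))"
proof
  assume h: "ee a (1 / (2 * (a - a0))) = ee a0 (1 / (2 * (a - a0)))"
  have "ee a (1 / (2 * (a - a0))) = ee a0 (1 / (2 * (a - a0))) * exp (pi * \<i>)"
  proof -
    have "2 * pi * \<i> * complex_of_real (a * (1 / (2 * (a - a0)))) =
          2 * pi * \<i> * complex_of_real (a0 * (1 / (2 * (a - a0)))) + pi * \<i>"
      using assms by (simp add: field_simps) 
    then show ?thesis by (simp add: exp_add)
  qed
  with h have "exp (pi * \<i>) = 1" by simp
  then show False by (simp add: exp_eq_1)
qed

lemma ee_cmod: "cmod (ee a x) = 1"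
  by (simp add: norm_exp_eq_Re)


lemma exp_indep:
  assumes "finite A"
  shows "(\<forall>x. (\<Sum>a\<in>A. c a * ee a x) = 0) \<Longrightarrow> a \<in> A \<Longrightarrow> c a = 0"
  using assms
proof (induction A arbitrary: c a rule: finite_induct)
  case empty then show ?case by simp
next
  case (insert a0 A c a)
  have Z: "(\<Sum>a\<in>A. c a * ee a x) + c a0 * ee a0 x = 0" for x
    using insert.prems(1) insert.hyps by (simp add: add.commute)
  have A0: "c a = 0" if "a \<in> A" for a
  proof -
    define t where "t = 1 / (2 * (a - a0))"
    have "\<forall>x. (\<Sum>b\<in>A. (c b * (ee b t - ee a0 t)) * ee b x) = 0"
    proof
      fix x
      have "(\<Sum>b\<in>A. (c b * (ee b t - ee a0 t)) * ee b x)
          = ((\<Sum>b\<in>A. c b * ee b (x + t)) + c a0 * ee a0 (x + t))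
            - ee a0 t * ((\<Sum>b\<in>A. c b * ee b x) + c a0 * ee a0 x)"
        unfolding ee_add by (simp only: algebra_simps sum_distrib_left sum_subtractf sum.distrib)
      also have "\<dots> = 0" using Z[of x] Z[of "x + t"] by simp
      finally show "(\<Sum>b\<in>A. (c b * (ee b t - ee a0 t)) * ee b x) = 0" .
    qed
    from insert.IH[OF this that] have "c a * (ee a t - ee a0 t) = 0" .
    moreover have "a \<noteq> a0" using that insert.hyps by auto
    ultimately show ?thesis using ee_neq[of a a0] unfolding t_def by simp
  qed
  have "(\<Sum>a\<in>A. c a * ee a 0) = 0" using A0 by simp
  with Z[of 0] have "c a0 = 0" by simp
  with A0 insert.prems(2) show ?case by auto
qed


lemma main:
  fixes f :: "real \<Rightarrow> complex"
  assumes hyp: "E_hyp f P" and diff: "\<forall>b\<in>snd ` \<Lambda>. \<forall>b'\<in>snd ` \<Lambda>. b < b' \<longrightarrow> b' - b \<in> P"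
  shows "gabor_lin_indep f \<Lambda>"
  unfolding gabor_lin_indep_def
proof (intro allI impI notI)
  fix F :: "(real \<times> real) set" and c :: "real \<times> real \<Rightarrow> complex"
  assume H: "finite F \<and> F \<subseteq> \<Lambda> \<and> (\<exists>p\<in>F. c p \<noteq> 0)"
    and AE0: "AE x in lebesgue. (\<Sum>p\<in>F. c p * MT (fst p) (snd p) f x) = 0"
  from H have fin: "finite F" and sub: "F \<subseteq> \<Lambda>" by auto
  from H obtain p0 where p0: "p0 \<in> F" "c p0 \<noteq> 0" by auto
  define U where "U b x = (\<Sum>p\<in>{p\<in>F. snd p = b}. c p * ee (fst p) x)" for b x
  have Ure: "U b x = (\<Sum>a\<in>fst ` {p\<in>F. snd p = b}. c (a,b) * ee a x)" for b x
  proof -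
    have "inj_on fst {p\<in>F. snd p = b}" by (auto simp: inj_on_def prod_eq_iff)
    then show ?thesis unfolding U_def by (auto simp: sum.reindex intro!: sum.cong)
  qed
  define Bs where "Bs = {b \<in> snd ` F. U b \<noteq> (\<lambda>_. 0)}"
  have finBs: "finite Bs" using fin unfolding Bs_def by auto
  have "snd p0 \<in> Bs"
  proof (rule ccontr)
    assume "snd p0 \<notin> Bs"
    then have "U (snd p0) = (\<lambda>_. 0)" using p0 unfolding Bs_def by auto
    then have "\<forall>x. (\<Sum>a\<in>fst ` {p\<in>F. snd p = snd p0}. c (a, snd p0) * ee a x) = 0"
      by (metis Ure)
    from exp_indep[OF _ this, of "fst p0"] fin p0 have "c (fst p0, snd p0) = 0" by auto
    with p0 show False by simp
  qed
  then have Bsne: "Bs \<noteq> {}" by auto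
  define b1 where "b1 = Max Bs"
  have b1: "b1 \<in> Bs" "\<forall>b\<in>Bs. b \<le> b1" using finBs Bsne unfolding b1_def by auto
  have sumeq: "(\<Sum>p\<in>F. c p * MT (fst p) (snd p) f x) = (\<Sum>b\<in>Bs. U b x * f (x - b))" for x
  proof -
    have "(\<Sum>p\<in>F. c p * MT (fst p) (snd p) f x)
        = (\<Sum>b\<in>snd ` F. \<Sum>p\<in>{p\<in>F. snd p = b}. c p * MT (fst p) (snd p) f x)"
      by (rule sum.image_gen[OF fin])
    also have "\<dots> = (\<Sum>b\<in>snd ` F. U b x * f (x - b))"
      unfolding U_def MT_def by (auto simp: sum_distrib_right mult.assoc intro!: sum.cong)
    also have "\<dots> = (\<Sum>b\<in>Bs. U b x * f (x - b))"
      by (rule sum.mono_neutral_right) (auto simp: Bs_def fin)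
    finally show ?thesis .
  qed
  define D where "D = (\<lambda>b. b1 - b) ` (Bs - {b1})"
  have finD: "finite D" using finBs unfolding D_def by auto
  have DP: "D \<subseteq> P"
  proof
    fix d assume "d \<in> D"
    then obtain b where b: "b \<in> Bs" "b \<noteq> b1" "d = b1 - b" unfolding D_def by auto
    with b1 have "b < b1" by force
    moreover have "b \<in> snd ` \<Lambda>" "b1 \<in> snd ` \<Lambda>" using b b1 sub unfolding Bs_def by auto
    ultimately show "d \<in> P" using diff b by auto
  qed
  define v where "v y = U b1 (y + b1)" for y
  have tp: "trig_poly v"
    unfolding trig_poly_def
  proof (intro exI conjI)
    show "finite (fst ` {p\<in>F. snd p = b1})" using fin by auto
    show "v = (\<lambda>x. \<Sum>a\<in>fst ` {p\<in>F. snd p = b1}. (c (a,b1) * ee a b1) * ee a x)"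
      unfolding v_def Ure ee_add by (simp add: mult.assoc)
  qed
  have vnz: "v \<noteq> (\<lambda>_. 0)"
  proof
    assume "v = (\<lambda>_. 0)"
    then have "U b1 x = 0" for x using v_def[of "x - b1"] by simp
    then have "U b1 = (\<lambda>_. 0)" by auto
    with b1 show False unfolding Bs_def by auto
  qed
  define K where "K = 1 + (\<Sum>p\<in>F. cmod (c p))"
  have Kpos: "K > 0" unfolding K_def by (simp add: add_pos_nonneg sum_nonneg)
  have Ubound: "cmod (U b x) \<le> K" for b x
  proof -
    have "cmod (U b x) \<le> (\<Sum>p\<in>{p\<in>F. snd p = b}. cmod (c p * ee (fst p) x))"
      unfolding U_def by (rule norm_sum)
    also have "\<dots> = (\<Sum>p\<in>{p\<in>F. snd p = b}. cmod (c p))" by (simp add: norm_mult ee_cmod)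
    also have "\<dots> \<le> (\<Sum>p\<in>F. cmod (c p))" by (rule sum_mono2[OF fin]) auto
    finally show ?thesis unfolding K_def by simp
  qed
  have AE1: "AE y in lebesgue. (\<Sum>b\<in>Bs. U b (y + b1) * f (y + b1 - b)) = 0"
    using AE_translate[OF AE0, of b1] by (simp add: sumeq)
  have Esub: "E_set v K D f \<subseteq> {y. (\<Sum>b\<in>Bs. U b (y + b1) * f (y + b1 - b)) \<noteq> 0}"
  proof (rule subsetI, rule ccontr)
    fix y assume yE: "y \<in> E_set v K D f"
      and "y \<notin> {y. (\<Sum>b\<in>Bs. U b (y + b1) * f (y + b1 - b)) \<noteq> 0}"
    then have Z: "(\<Sum>b\<in>Bs. U b (y + b1) * f (y + b1 - b)) = 0" by simp
    have "(\<Sum>b\<in>Bs. U b (y + b1) * f (y + b1 - b))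
        = v y * f y + (\<Sum>b\<in>Bs - {b1}. U b (y + b1) * f (y + b1 - b))"
      using sum.remove[OF finBs b1(1), of "\<lambda>b. U b (y + b1) * f (y + b1 - b)"] by (simp add: v_def)
    with Z have "v y * f y = - (\<Sum>b\<in>Bs - {b1}. U b (y + b1) * f (y + b1 - b))"
      by (simp add: eq_neg_iff_add_eq_0)
    then have "cmod (v y * f y) = cmod (\<Sum>b\<in>Bs - {b1}. U b (y + b1) * f (y + b1 - b))" by simp
    also have "\<dots> \<le> (\<Sum>b\<in>Bs - {b1}. cmod (U b (y + b1) * f (y + b1 - b)))" by (rule norm_sum)
    also have "\<dots> \<le> (\<Sum>b\<in>Bs - {b1}. K * cmod (f (y + (b1 - b))))"
      by (rule sum_mono) (simp add: norm_mult mult_right_mono Ubound add_diff_eq)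
    also have "\<dots> = K * (\<Sum>d\<in>D. cmod (f (y + d)))"
    proof -
      have "inj_on (\<lambda>b. b1 - b) (Bs - {b1})" by (auto simp: inj_on_def)
      then show ?thesis unfolding D_def by (simp add: sum.reindex sum_distrib_left)
    qed
    finally show False using yE unfolding E_set_def by simp
  qed
  from AE1 obtain N where N: "N \<in> null_sets lebesgue"
      "{y \<in> space lebesgue. \<not> (\<Sum>b\<in>Bs. U b (y + b1) * f (y + b1 - b)) = 0} \<subseteq> N"
    by (auto simp: eventually_ae_filter)
  have "E_set v K D f \<subseteq> N" using Esub N(2) by auto
  then have "E_set v K D f \<in> null_sets lebesgue" using null_sets_completion_subset N(1) by blast
  then have "emeasure lebesgue (E_set v K D f) = 0" by auto
  moreover have "emeasure lebesgue (E_set v K D f) > 0"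
    using hyp tp vnz finD DP Kpos unfolding E_hyp_def by blast
  ultimately show False by simp
qed


theorem theorem3p1:
  fixes f :: "real \<Rightarrow> complex"
  assumes "f \<in> borel_measurable lebesgue"
  shows "(E_hyp f {0<..} \<longrightarrow> gabor_lin_indep f UNIV)
    \<and> (\<forall>b::real. b > 0 \<and> E_hyp f {b * real n | n. n \<ge> 1}
           \<longrightarrow> gabor_lin_indep f (UNIV \<times> {b * real_of_int k | k. True}))"
proof (intro conjI allI impI)
  assume "E_hyp f {0<..}"
  then show "gabor_lin_indep f UNIV" by (rule main) auto
next
  fix b :: real
  assume h: "b > 0 \<and> E_hyp f {b * real n | n. n \<ge> 1}"
  show "gabor_lin_indep f (UNIV \<times> {b * real_of_int k | k. True})"
  proof (rule main[OF h[THEN conjunct2]], intro ballI impI)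
    fix x y assume x: "x \<in> snd ` (UNIV \<times> {b * real_of_int k | k. True})"
      and y: "y \<in> snd ` (UNIV \<times> {b * real_of_int k | k. True})" and lt: "x < y"
    from x obtain k where k: "x = b * real_of_int k" by auto
    from y obtain k' where k': "y = b * real_of_int k'" by auto
    from lt h k k' have "k < k'" by (simp add: mult_less_cancel_left_pos)
    then have "y - x = b * real (nat (k' - k)) \<and> nat (k' - k) \<ge> 1"
      using k k' by (simp add: algebra_simps)
    then show "y - x \<in> {b * real n | n. n \<ge> 1}" by blast
  qed
qed

end
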